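(* Let $b\geq2$ and even, $k\leq n-2$ and $\mathbf s=s_1s_2\ldots s_k$. If $\mathbf t$ is the last sequence in $\mathbf s\,|\,R_n(b)$ when this set is listed in co-Reflected Gray Code Order, then $\mathbf t$ has one of the following forms: 1. $\mathbf t=\mathbf sM0\ldots0$ if $U_{k+1}$ is even and $M$ is even, 2. $\mathbf t=\mathbf sM(M+1)0\ldots0$ if $U_{k+1}$ is even and $M$ is odd, 3. $\mathbf t=\mathbf s0\ldots0$ if $U_{k+1}$ is odd, where $M=\min\{b,\max\{s_i\}_{i=1}^k+1\}$ and $U_{k+1}=\sum_{i=1}^k[s_i\neq0 \text{ and } s_i \text{ is even}]$.
   Context: A restricted growth function of length $n$ is an integer sequence $s_1s_2\ldots s_n$ with $s_1=0$ and $0\leq s_{i+1}\leq \max\{s_j\}_{j=1}^i+1$ for $1\leq i\leq n-1$; $R_n$ is the set of these, and for $b\geq1$, $R_n(b)=\{s_1\ldots s_n\in R_n : \max\{s_i\}_{i=1}^n\leq b\}$. For a sequence $\mathbf u$, $\mathbf u\,|\,S$ denotes the subset of $S$ of sequences having prefix $\mathbf u$. The co-Reflected Gray Code Order on $\{0,1,\ldots,m-1\}^n$ ($m\geq2$) is defined by: $s_1\ldots s_n$ is less than $t_1\ldots t_n$ if, for the position $k$ with $s_i=t_i$ ($1\leq i\leq k-1$) and $s_k\neq t_k$, either $U_k$ is even and $s_k<t_k$, or $U_k$ is odd and $s_k>t_k$, where $U_k=|\{i\in\{1,\ldots,k-1\}: s_i\neq0,\ s_i \text{ even}\}|$. $[P]$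 denotes the Iverson bracket (1 if $P$ is true, 0 otherwise). *)

theory Defs
  imports Main
begin

(* Sequences s_1 ... s_n are represented as lists; s_i is  s ! (i-1). *)

definition rgf :: "nat \<Rightarrow> nat list \<Rightarrow> bool" where
  "rgf n s \<longleftrightarrow> length s = n \<and> (0 < n \<longrightarrow> s ! 0 = 0) \<and>
     (\<forall>i. Suc i < n \<longrightarrow> s ! Suc i \<le> Max (set (take (Suc i) s)) + 1)"

definition R_b :: "nat \<Rightarrow> nat \<Rightarrow> nat list set" where
  "R_b n b = {s. rgf n s \<and> (\<forall>x\<in>set s. x \<le> b)}"

definition with_prefix :: "nat list \<Rightarrow> nat list set \<Rightarrow> nat list set" where
  "with_prefix u S = {s \<in> S. take (length u) s = u}"

text \<open>U_k for a sequence s: number of i in {1..k-1} with s_i nonzero and even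
  (here given via the 0-indexed length-(k-1) prefix).\<close>
definition U :: "nat list \<Rightarrow> nat \<Rightarrow> nat" where
  "U s k = card {i. i < k - 1 \<and> s ! i \<noteq> 0 \<and> even (s ! i)}"

definition coRGC_less :: "nat list \<Rightarrow> nat list \<Rightarrow> bool" where
  "coRGC_less s t \<longleftrightarrow> length s = length t \<and>
     (\<exists>j < length s. take j s = take j t \<and> s ! j \<noteq> t ! j \<and>
        ((even (U s (Suc j)) \<and> s ! j < t ! j) \<or> (odd (U s (Suc j)) \<and> s ! j > t ! j)))"

definition is_last_coRGC :: "nat list set \<Rightarrow> nat list \<Rightarrow> bool" where
  "is_last_coRGC S t \<longleftrightarrow> t \<in> S \<and> (\<forall>u\<in>S. u \<noteq> t \<longrightarrow> coRGC_less u t)"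

end

theory Submission
  imports Defs
begin

lemma U_filter:
  assumes "j \<le> length x"
  shows "U x (Suc j) = length (filter (\<lambda>v. v \<noteq> 0 \<and> even v) (take j x))"
proof -
  have "length (filter (\<lambda>v. v \<noteq> 0 \<and> even v) (take j x))
      = card {i. i < length (take j x) \<and> (take j x) ! i \<noteq> 0 \<and> even ((take j x) ! i)}"
    by (rule length_filter_conv_card)
  also have "{i. i < length (take j x) \<and> (take j x) ! i \<noteq> 0 \<and> even ((take j x) ! i)}
      = {i. i < j \<and> x ! i \<noteq> 0 \<and> even (x ! i)}"
    using assms by auto
  finally show ?thesis unfolding U_def by simp
qed

lemma rgf_take:
  assumes "rgf n x" "m \<le> n"
  shows "rgf m (take m x)"
  using assms unfolding rgf_def by (auto simp: min_def)

lemma rgf_snoc: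
  assumes "xs \<noteq> []"
  shows "rgf (Suc (length xs)) (xs @ [y]) \<longleftrightarrow> rgf (length xs) xs \<and> y \<le> Max (set xs) + 1"
proof
  assume h: "rgf (Suc (length xs)) (xs @ [y])"
  have "rgf (length xs) (take (length xs) (xs @ [y]))"
    by (rule rgf_take[OF h]) simp
  moreover have "y \<le> Max (set xs) + 1"
  proof -
    obtain i where i: "length xs = Suc i" using assms by (cases xs) auto
    have "\<forall>ia. Suc ia < Suc (length xs) \<longrightarrow> (xs @ [y]) ! Suc ia \<le> Max (set (take (Suc ia) (xs @ [y]))) + 1"
      using h unfolding rgf_def by blast
    hence "Suc i < Suc (length xs) \<longrightarrow> (xs @ [y]) ! Suc i \<le> Max (set (take (Suc i) (xs @ [y]))) + 1"
      by (rule spec)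
    hence "(xs @ [y]) ! Suc i \<le> Max (set (take (Suc i) (xs @ [y]))) + 1"
      using i by simp
    thus ?thesis using i by (simp add: nth_append)
  qed
  ultimately show "rgf (length xs) xs \<and> y \<le> Max (set xs) + 1" by simp
next
  assume h: "rgf (length xs) xs \<and> y \<le> Max (set xs) + 1"
  show "rgf (Suc (length xs)) (xs @ [y])"
    unfolding rgf_def
  proof (intro conjI allI impI)
    show "length (xs @ [y]) = Suc (length xs)" by simp
    show "(xs @ [y]) ! 0 = 0" using h assms unfolding rgf_def by (simp add: nth_append)
    fix i assume i: "Suc i < Suc (length xs)"
    show "(xs @ [y]) ! Suc i \<le> Max (set (take (Suc i) (xs @ [y]))) + 1"
    proof (cases "Suc i < length xs")
      case True
      then show ?thesis using h unfolding rgf_def by (simp add: nth_append)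
    next
      case False
      then have "Suc i = length xs" using i by simp
      then show ?thesis using h by (simp add: nth_append)
    qed
  qed
qed

lemma rgf_zeros:
  assumes "xs \<noteq> []" "rgf (length xs) xs"
  shows "rgf (length xs + m) (xs @ replicate m 0)"
proof (induction m)
  case 0 then show ?case using assms by simp
next
  case (Suc m)
  have e: "xs @ replicate (Suc m) 0 = (xs @ replicate m 0) @ [0]"
    by (simp add: replicate_append_same)
  have l: "length xs + Suc m = Suc (length (xs @ replicate m 0))" by simp
  have ne: "xs @ replicate m 0 \<noteq> []" using assms(1) by simp
  have "rgf (length (xs @ replicate m 0)) (xs @ replicate m 0)" using Suc.IH by simp
  hence "rgf (Suc (length (xs @ replicate m 0))) ((xs @ replicate m 0) @ [0])"
    using rgf_snoc[OF ne, of 0] by blast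
  thus ?case unfolding e l .
qed

lemma last_unique:
  assumes "is_last_coRGC S t" "t0 \<in> S" "\<And>u. u \<in> S \<Longrightarrow> \<not> coRGC_less t0 u"
  shows "t = t0"
proof (rule ccontr)
  assume ne: "t \<noteq> t0"
  have tS: "t \<in> S" and all: "\<forall>u\<in>S. u \<noteq> t \<longrightarrow> coRGC_less u t"
    using assms(1) unfolding is_last_coRGC_def by simp_all
  have "coRGC_less t0 t" using all assms(2) ne by simp
  thus False using assms(3)[OF tS] by simp
qed

theorem proposition3:
  fixes b n k :: nat and s t :: "nat list"
  assumes "b \<ge> 2" and "even b"
    and "1 \<le> k" and "k + 2 \<le> n"
    and "length s = k"
    and "is_last_coRGC (with_prefix s (R_b n b)) t"
  defines "M \<equiv> min b (Max (set s) + 1)"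
  defines "Uk \<equiv> U s (k + 1)"
  shows "(even Uk \<and> even M \<longrightarrow> t = s @ [M] @ replicate (n - k - 1) 0)
       \<and> (even Uk \<and> odd M \<longrightarrow> t = s @ [M, M + 1] @ replicate (n - k - 2) 0)
       \<and> (odd Uk \<longrightarrow> t = s @ replicate (n - k) 0)"
proof -
  define P where "P = (\<lambda>v::nat. v \<noteq> 0 \<and> even v)"
  define S where "S = with_prefix s (R_b n b)"
  have tS: "t \<in> S" using assms(6) unfolding S_def is_last_coRGC_def by simp
  have sne: "s \<noteq> []" using assms(3,5) by auto
  have trgf: "rgf n t" and tb: "\<forall>x\<in>set t. x \<le> b" and ts: "take k t = s"
    using tS assms(5) unfolding S_def with_prefix_def R_b_def by auto
  have srgf: "rgf k s" using rgf_take[OF trgf, of k] ts assms(4) by simp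
  have sb: "\<forall>x\<in>set s. x \<le> b" using tb ts by (metis in_set_takeD)
  have Uk: "Uk = length (filter P s)"
    unfolding Uk_def P_def using U_filter[of k s] assms(5) by simp
  have Mb: "M \<le> b" unfolding M_def by simp
  have Mpos: "M \<ge> 1" unfolding M_def using assms(1) by simp
  have uS: "rgf n u \<and> (\<forall>x\<in>set u. x \<le> b) \<and> take k u = s" if "u \<in> S" for u
    using that assms(5) unfolding S_def with_prefix_def R_b_def by auto
  have ukM: "u ! k \<le> M" if "u \<in> S" for u
  proof -
    obtain i where i: "k = Suc i" using assms(3) by (cases k) auto
    have "u ! Suc i \<le> Max (set (take (Suc i) u)) + 1"
      using uS[OF that] i assms(4) unfolding rgf_def by auto
    hence "u ! k \<le> Max (set s) + 1" using uS[OF that] i by simp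
    moreover have "u ! k \<le> b"
    proof -
      have "length u = n" using uS[OF that] unfolding rgf_def by simp
      hence "u ! k \<in> set u" using assms(4) by simp
      thus ?thesis using uS[OF that] by blast
    qed
    ultimately show ?thesis unfolding M_def by simp
  qed
  have jk: "k \<le> j" if "u \<in> S" "take j t0 = take j u" "t0 ! j \<noteq> u ! j" "take k t0 = s" for u t0 j
  proof (rule ccontr)
    assume "\<not> k \<le> j"
    hence "j < k" by simp
    hence "t0 ! j = s ! j" "u ! j = s ! j" using that(4) uS[OF that(1)]
      by (metis nth_take)+
    thus False using that(3) by simp
  qed
  have Pd: "U x (Suc j) = length (filter P (take j x))" if "j \<le> length x" for x j
    using U_filter[OF that] unfolding P_def by simp
  have ulen: "length u = n" if "u \<in> S" for u using uS[OF that] unfolding rgf_def by simp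
  have inS: "x \<in> S" if "rgf n x" "\<forall>v\<in>set x. v \<le> b" "take k x = s" for x
    using that assms(5) unfolding S_def with_prefix_def R_b_def by auto
  have Ms: "M \<le> Max (set s) + 1" unfolding M_def by simp
  have sMrgf: "rgf (Suc k) (s @ [M])" using rgf_snoc[OF sne, of M] srgf Ms assms(5) by simp
  have c3: "odd Uk \<longrightarrow> t = s @ replicate (n - k) 0"
  proof
    assume oU: "odd Uk"
    define t0 where "t0 = s @ replicate (n - k) 0"
    have "rgf (k + (n - k)) t0" unfolding t0_def using rgf_zeros[OF sne] srgf assms(5) by simp
    hence r: "rgf n t0" using assms(4) by simp
    have t0S: "t0 \<in> S"
      by (rule inS[OF r]) (use sb assms(5) in \<open>auto simp: t0_def\<close>)
    have "\<not> coRGC_less t0 u" if uS': "u \<in> S" for u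
    proof
      assume "coRGC_less t0 u"
      then obtain j where j: "j < length t0" "take j t0 = take j u" "t0 ! j \<noteq> u ! j"
        "(even (U t0 (Suc j)) \<and> t0 ! j < u ! j) \<or> (odd (U t0 (Suc j)) \<and> t0 ! j > u ! j)"
        unfolding coRGC_less_def by blast
      have "k \<le> j" by (rule jk[OF uS' j(2) j(3)]) (simp add: t0_def assms(5))
      then obtain d where d: "j = k + d" using le_Suc_ex by blast
      have ln: "length t0 = n" using r unfolding rgf_def by simp
      have "U t0 (Suc j) = length (filter P (take j t0))" using Pd j(1) by simp
      also have "take j t0 = s @ replicate d 0" using d assms(5) j(1) ln by (simp add: t0_def)
      finally have "U t0 (Suc j) = Uk" using Uk by (simp add: P_def)
      moreover have "t0 ! j = 0" using d j(1) ln assms(5) by (simp add: t0_def nth_append)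
      ultimately show False using j(4) oU by simp
    qed
    thus "t = t0" using last_unique[OF assms(6)[folded S_def] t0S] by blast
  qed
  have c1: "even Uk \<and> even M \<longrightarrow> t = s @ [M] @ replicate (n - k - 1) 0"
  proof
    assume eU: "even Uk \<and> even M"
    define t0 where "t0 = s @ [M] @ replicate (n - k - 1) 0"
    have "rgf (length (s @ [M]) + (n - k - 1)) ((s @ [M]) @ replicate (n - k - 1) 0)"
      by (rule rgf_zeros) (use sMrgf assms(5) in auto)
    hence r: "rgf n t0" using assms(4,5) by (simp add: t0_def)
    have t0S: "t0 \<in> S"
      by (rule inS[OF r]) (use sb Mb assms(5) in \<open>auto simp: t0_def\<close>)
    have "\<not> coRGC_less t0 u" if uS': "u \<in> S" for u
    proof
      assume "coRGC_less t0 u"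
      then obtain j where j: "j < length t0" "take j t0 = take j u" "t0 ! j \<noteq> u ! j"
        "(even (U t0 (Suc j)) \<and> t0 ! j < u ! j) \<or> (odd (U t0 (Suc j)) \<and> t0 ! j > u ! j)"
        unfolding coRGC_less_def by blast
      have "k \<le> j" by (rule jk[OF uS' j(2) j(3)]) (simp add: t0_def assms(5))
      have ln: "length t0 = n" using r unfolding rgf_def by simp
      show False
      proof (cases "j = k")
        case True
        have "U t0 (Suc j) = length (filter P (take j t0))" using Pd j(1) by simp
        also have "take j t0 = s" using True assms(5) by (simp add: t0_def)
        finally have "U t0 (Suc j) = Uk" using Uk by simp
        moreover have "t0 ! j = M" using True assms(5) by (simp add: t0_def nth_append)
        ultimately show False using j(4) eU ukM[OF uS'] True by simp
      next
        case False
        then obtain d where d: "j = k + 1 + d" using \<open>k \<le> j\<close>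
        proof -
          have "k + 1 \<le> j" using \<open>k \<le> j\<close> False by simp
          thus ?thesis using le_Suc_ex that by blast
        qed
        have "U t0 (Suc j) = length (filter P (take j t0))" using Pd j(1) by simp
        also have "take j t0 = s @ [M] @ replicate d 0" using d assms(5) j(1) ln by (simp add: t0_def)
        finally have "U t0 (Suc j) = Uk + 1" using Uk eU Mpos by (simp add: P_def)
        moreover have "t0 ! j = 0" using d j(1) ln assms(5) by (simp add: t0_def nth_append)
        ultimately show False using j(4) eU by simp
      qed
    qed
    thus "t = t0" using last_unique[OF assms(6)[folded S_def] t0S] by blast
  qed
  have c2: "even Uk \<and> odd M \<longrightarrow> t = s @ [M, M + 1] @ replicate (n - k - 2) 0"
  proof
    assume eU: "even Uk \<and> odd M"
    have Mneb: "M \<noteq> b" using eU assms(2) by auto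
    hence MM: "M = Max (set s) + 1" unfolding M_def by (simp add: min_def split: if_splits)
    have Mlb: "M + 1 \<le> b" using Mb Mneb by simp
    have MaxsM: "Max (set (s @ [M])) = M"
      using MM sne by (simp add: max_def)
    define t0 where "t0 = s @ [M, M + 1] @ replicate (n - k - 2) 0"
    have sMM: "rgf (Suc (Suc k)) ((s @ [M]) @ [M + 1])"
      using rgf_snoc[of "s @ [M]" "M + 1"] sMrgf MaxsM assms(5) by simp
    have "rgf (length ((s @ [M]) @ [M + 1]) + (n - k - 2)) (((s @ [M]) @ [M + 1]) @ replicate (n - k - 2) 0)"
      by (rule rgf_zeros) (use sMM assms(5) in auto)
    moreover have eq: "length ((s @ [M]) @ [M + 1]) + (n - k - 2) = n" using assms(4,5) by simp
    ultimately have "rgf n (((s @ [M]) @ [M + 1]) @ replicate (n - k - 2) 0)" by (simp only: eq)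
    hence r: "rgf n t0" by (simp add: t0_def)
    have t0S: "t0 \<in> S"
      by (rule inS[OF r]) (use sb Mb Mlb assms(5) in \<open>auto simp: t0_def\<close>)
    have "\<not> coRGC_less t0 u" if uS': "u \<in> S" for u
    proof
      assume "coRGC_less t0 u"
      then obtain j where j: "j < length t0" "take j t0 = take j u" "t0 ! j \<noteq> u ! j"
        "(even (U t0 (Suc j)) \<and> t0 ! j < u ! j) \<or> (odd (U t0 (Suc j)) \<and> t0 ! j > u ! j)"
        unfolding coRGC_less_def by blast
      have "k \<le> j" by (rule jk[OF uS' j(2) j(3)]) (simp add: t0_def assms(5))
      have ln: "length t0 = n" using r unfolding rgf_def by simp
      have cases3: "j = k \<or> j = k + 1 \<or> (\<exists>d. j = k + 2 + d)" using \<open>k \<le> j\<close>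
        proof -
          have "j = k \<or> j = k + 1 \<or> k + 2 \<le> j" using \<open>k \<le> j\<close> by linarith
          thus ?thesis using le_Suc_ex by blast
        qed
      show False
      proof -
        { assume True: "j = k"
          have "U t0 (Suc j) = length (filter P (take j t0))" using Pd j(1) by simp
          also have "take j t0 = s" using True assms(5) by (simp add: t0_def)
          finally have "U t0 (Suc j) = Uk" using Uk by simp
          moreover have "t0 ! j = M" using True assms(5) by (simp add: t0_def nth_append)
          ultimately have False using j(4) eU ukM[OF uS'] True by simp }
        moreover
        { assume True: "j = k + 1"
          have "U t0 (Suc j) = length (filter P (take j t0))" using Pd j(1) by simp
          also have tj: "take j t0 = s @ [M]" using True assms(5) by (simp add: t0_def)
          finally have "U t0 (Suc j) = Uk" using Uk eU by (simp add: P_def)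
          moreover have "t0 ! j = M + 1" using True assms(5) by (simp add: t0_def nth_append)
          moreover have "u ! j \<le> M + 1"
          proof -
            have "\<forall>i. Suc i < n \<longrightarrow> u ! Suc i \<le> Max (set (take (Suc i) u)) + 1"
              using uS[OF uS'] unfolding rgf_def by blast
            hence "u ! Suc k \<le> Max (set (take (Suc k) u)) + 1" using assms(4) by simp
            moreover have "take (Suc k) u = s @ [M]" using tj j(2) True by simp
            ultimately show ?thesis using MaxsM True by simp
          qed
          ultimately have False using j(4) eU by simp }
        moreover
        { fix d assume d: "j = k + 2 + d"
          have "U t0 (Suc j) = length (filter P (take j t0))" using Pd j(1) by simp
          also have "take j t0 = s @ [M, M + 1] @ replicate d 0" using d assms(5) j(1) ln by (simp add: t0_def)
          finally have "U t0 (Suc j) = Uk + 1" using Uk eU by (simp add: P_def)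
          moreover have "t0 ! j = 0" using d j(1) ln assms(5) by (simp add: t0_def nth_append)
          ultimately have False using j(4) eU by simp }
        ultimately show False using cases3 by blast
      qed
    qed
    thus "t = t0" using last_unique[OF assms(6)[folded S_def] t0S] by blast
  qed
  show ?thesis using c1 c2 c3 by blast
qed

end
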